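(* Let $d\in\mathbb{Z}^+$, let $A,C_0\subseteq\mathbb{R}^2$ and $B_0\subseteq A\setminus C_0$. Let $B\subseteq A$ with $|B|=\binom{d+2}{2}-3$ satisfy: (i) $\dim\psi_d(B)=\binom{d+2}{2}-4$; (ii) $B\supseteq B_0$; (iii) $B\cap C_0=B\setminus B_0$; (iv) for all $(e,D)\in I(B,C_0)$, $\max\{\tau_e(B,D),\mu_e(B,D)\}<\binom{d+2}{2}$; (v) for all $(e,D)\in(\{1,\dots,d-1\}\times\mathcal{P}(B))\setminus I(B,C_0)$ with $\alpha_e(D)\ge0$, we have $\gamma_e(B,D)<\binom{d+2}{2}-\binom{d-e+2}{2}$ and $\beta_e(B,D)<0$. Then $B\in\mathcal{N}_d(A,B_0,C_0)$.
   Context: For $k\in\mathbb{Z}^+$, a curve of degree $k$ is the zero set in $\mathbb{R}^2$ of a polynomial in $\mathbb{R}[x,y]$ of degree exactly $k$; $\mathcal{C}_k$ is the family of such curves. For $k\in\mathbb{Z}^+$ let $I_k=\{(i,j)\in\mathbb{Z}_{\ge 0}^2: 1\le i+j\le k\}$ and $\psi_k:\mathbb{R}^2\to\mathbb{R}^{\binom{k+2}{2}-1}$, $\psi_k(a_1,a_2)=(a_1^ia_2^j)_{(i,j)\in I_k}$. $\mathrm{Fl}(S)$ is the affine hull of $S$ ($\mathrm{Fl}(\emptyset)=\emptyset$); $\dim S:=\dim\mathrm{Fl}(S)$, $\dim\emptyset=-1$. $\mathcal{P}(X)$ is the power set. With $d$ fixed, for $e\in\{1,\dots,d-1\}$, finite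 $B\subseteq\mathbb{R}^2$ and $D\subseteq B$: $V_e(D):=\mathrm{Fl}(\psi_e(D))$; $V_d(B):=\mathrm{Fl}(\psi_d(B))$; $W_e(B,D):=\mathrm{Fl}\big(\psi_{d-e}(B\setminus\psi_e^{-1}(V_e(D)))\big)$; $\alpha_e(D):=\binom{e+2}{2}-2-\dim V_e(D)$; $\beta_e(B,D):=\binom{d-e+2}{2}-3-\dim W_e(B,D)$; $\gamma_e(B,D):=|V_e(D)\cap\psi_e(B)|$; $\mu_e(B,D):=0$ if $\alpha_e(D)<0$, else $\mu_e(B,D):=\alpha_e(D)+\gamma_e(B,D)+\binom{d-e+2}{2}$; $\tau_e(B,D):=0$ if $\min\{\alpha_e(D),\beta_e(B,D)\}<0$ or $\gamma_e(B,D)>\binom{d+2}{2}-\binom{d-e+2}{2}-1$; $:=\alpha_e(D)+\beta_e(B,D)+|B|+2$ if $\min\{\alpha_e(D),\beta_e(B,D)\}\ge0$ and $\gamma_e(B,D)=\binom{d+2}{2}-\binom{d-e+2}{2}-1$; $:=\alpha_e(D)+\beta_e(B,D)+|B|+3$ if $\min\{\alpha_e(D),\beta_e(B,D)\}\ge0$ and $\gamma_e(B,D)<\binom{d+2}{2}-\binom{d-e+2}{2}-1$; $U_e(B,D):=\psi_d^{-1}(V_d(B))$ if $\alpha_e(D)<0$; $:=\psi_d^{-1}(V_d(B))\cup\psi_e^{-1}(V_e(D))$ if $\beta_e(B,D)<0\le\alpha_e(D)$; $:=\psi_d^{-1}(V_d(B))\cup\psi_e^{-1}(V_e(D))\cup\psi_{d-e}^{-1}(W_e(B,D))$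 if $\alpha_e(D),\beta_e(B,D)\ge0$; $I(B,C):=\{(f,E)\in\{1,\dots,d-1\}\times\mathcal{P}(B): C\not\subseteq U_f(B,E)\}$. $\mathcal{N}_d(A)$ is the family of $B\subseteq A$ with $|B|=\binom{d+2}{2}-3$ such that: (a) $\dim\psi_d(B)=\binom{d+2}{2}-4$; (b) for all $e\in\{1,\dots,d-1\}$ and $C\in\mathcal{C}_e$, $|B\cap C|<\binom{d+2}{2}-\binom{d-e+2}{2}$; (c) for all $e\in\{1,\dots,d-1\}$ and $C\in\mathcal{C}_e$ with $|B\cap C|=\binom{d+2}{2}-\binom{d-e+2}{2}-1$, $\dim\psi_{d-e}(B\setminus C)=\binom{d-e+2}{2}-3$; (d) for all $e\in\{1,\dots,d-1\}$ and $C\in\mathcal{C}_e$ with $|B\cap C|<\binom{d+2}{2}-\binom{d-e+2}{2}-1$, $\dim\psi_{d-e}(B\setminus C)>\binom{d-e+2}{2}-3$. Finally $\mathcal{N}_d(A,B_0,C_0):=\{E\in\mathcal{N}_d(A): B_0\subseteq E\text{ and }E\cap C_0=E\setminus B_0\}$. *)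

theory Defs
  imports "HOL-Analysis.Analysis" "HOL-Library.Function_Algebras"
begin

text \<open>We regard R^N (N = (k+2 choose 2) - 1) as the space of functions
  nat \<times> nat \<Rightarrow> real supported on I_k.  To use the library notions of affine
  hull and dimension we equip functions with the pointwise real vector space
  structure.\<close>

instantiation "fun" :: (type, real_vector) real_vector
begin
definition scaleR_fun :: "real \<Rightarrow> ('a \<Rightarrow> 'b) \<Rightarrow> 'a \<Rightarrow> 'b"
  where "scaleR_fun r f = (\<lambda>x. r *\<^sub>R f x)"
instance
  by standard (auto simp: scaleR_fun_def fun_eq_iff scaleR_add_right scaleR_add_left)
end

type_synonym point = "real \<times> real"
type_synonym coords = "nat \<times> nat \<Rightarrow> real"

definition Iset :: "nat \<Rightarrow> (nat \<times> nat) set" where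
  "Iset k = {(i, j). 1 \<le> i + j \<and> i + j \<le> k}"

definition psi :: "nat \<Rightarrow> point \<Rightarrow> coords" where
  "psi k a = (\<lambda>(i, j). if (i, j) \<in> Iset k then fst a ^ i * snd a ^ j else 0)"

definition psi_pre :: "nat \<Rightarrow> coords set \<Rightarrow> point set" where
  "psi_pre k V = {a. psi k a \<in> V}"

definition Fl :: "coords set \<Rightarrow> coords set" where
  "Fl S = affine hull S"

definition fdim :: "coords set \<Rightarrow> int" where
  "fdim S = (if Fl S = {} then -1
             else int (dim {x - y | x y. x \<in> Fl S \<and> y \<in> Fl S}))"

definition curve_of_degree :: "nat \<Rightarrow> point set \<Rightarrow> bool" where
  "curve_of_degree k C \<longleftrightarrow>
     (\<exists>c :: nat \<times> nat \<Rightarrow> real.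
        (\<forall>i j. c (i, j) \<noteq> 0 \<longrightarrow> i + j \<le> k) \<and>
        (\<exists>i j. i + j = k \<and> c (i, j) \<noteq> 0) \<and>
        C = {p. (\<Sum>(i, j)\<in>{(i, j). i + j \<le> k}. c (i, j) * fst p ^ i * snd p ^ j) = 0})"

definition bin2 :: "nat \<Rightarrow> int" where
  "bin2 k = int ((k + 2) choose 2)"

definition Ve :: "nat \<Rightarrow> point set \<Rightarrow> coords set" where
  "Ve e D = Fl (psi e ` D)"

definition Vd :: "nat \<Rightarrow> point set \<Rightarrow> coords set" where
  "Vd d B = Fl (psi d ` B)"

definition We :: "nat \<Rightarrow> nat \<Rightarrow> point set \<Rightarrow> point set \<Rightarrow> coords set" where
  "We d e B D = Fl (psi (d - e) ` (B - psi_pre e (Ve e D)))"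

definition alpha :: "nat \<Rightarrow> point set \<Rightarrow> int" where
  "alpha e D = bin2 e - 2 - fdim (psi e ` D)"

definition beta :: "nat \<Rightarrow> nat \<Rightarrow> point set \<Rightarrow> point set \<Rightarrow> int" where
  "beta d e B D = bin2 (d - e) - 3 - fdim (We d e B D)"

definition gamma :: "nat \<Rightarrow> point set \<Rightarrow> point set \<Rightarrow> nat" where
  "gamma e B D = card (Ve e D \<inter> psi e ` B)"

definition mu :: "nat \<Rightarrow> nat \<Rightarrow> point set \<Rightarrow> point set \<Rightarrow> int" where
  "mu d e B D = (if alpha e D < 0 then 0
                 else alpha e D + int (gamma e B D) + bin2 (d - e))"

definition tau :: "nat \<Rightarrow> nat \<Rightarrow> point set \<Rightarrow> point set \<Rightarrow> int" where
  "tau d e B D =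
     (if min (alpha e D) (beta d e B D) < 0 \<or> int (gamma e B D) > bin2 d - bin2 (d - e) - 1 then 0
      else if int (gamma e B D) = bin2 d - bin2 (d - e) - 1
        then alpha e D + beta d e B D + int (card B) + 2
      else alpha e D + beta d e B D + int (card B) + 3)"

definition U :: "nat \<Rightarrow> nat \<Rightarrow> point set \<Rightarrow> point set \<Rightarrow> point set" where
  "U d e B D =
     (if alpha e D < 0 then psi_pre d (Vd d B)
      else if beta d e B D < 0 then psi_pre d (Vd d B) \<union> psi_pre e (Ve e D)
      else psi_pre d (Vd d B) \<union> psi_pre e (Ve e D) \<union> psi_pre (d - e) (We d e B D))"

definition Iidx :: "nat \<Rightarrow> point set \<Rightarrow> point set \<Rightarrow> (nat \<times> point set) set" where
  "Iidx d B C = {(f, E). f \<in> {1..d-1} \<and> E \<in> Pow B \<and> \<not> C \<subseteq> U d f B E}"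

definition Nd :: "nat \<Rightarrow> point set \<Rightarrow> point set set" where
  "Nd d A = {B. B \<subseteq> A \<and> finite B \<and> int (card B) = bin2 d - 3 \<and>
     fdim (psi d ` B) = bin2 d - 4 \<and>
     (\<forall>e\<in>{1..d-1}. \<forall>C. curve_of_degree e C \<longrightarrow>
        int (card (B \<inter> C)) < bin2 d - bin2 (d - e)) \<and>
     (\<forall>e\<in>{1..d-1}. \<forall>C. curve_of_degree e C \<longrightarrow>
        int (card (B \<inter> C)) = bin2 d - bin2 (d - e) - 1 \<longrightarrow>
        fdim (psi (d - e) ` (B - C)) = bin2 (d - e) - 3) \<and>
     (\<forall>e\<in>{1..d-1}. \<forall>C. curve_of_degree e C \<longrightarrow>
        int (card (B \<inter> C)) < bin2 d - bin2 (d - e) - 1 \<longrightarrow>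
        fdim (psi (d - e) ` (B - C)) > bin2 (d - e) - 3)}"

definition Nd3 :: "nat \<Rightarrow> point set \<Rightarrow> point set \<Rightarrow> point set \<Rightarrow> point set set" where
  "Nd3 d A B0 C0 = {E \<in> Nd d A. B0 \<subseteq> E \<and> E \<inter> C0 = E - B0}"

end

theory Submission imports Defs begin

lemma Fl_empty: "Fl {} = {}" by (simp add: Fl_def)

lemma fdim_Fl: "fdim (Fl S) = fdim S"
  by (simp add: fdim_def Fl_def hull_hull)

lemma dir_eq:
  assumes "a \<in> S"
  shows "{x - y | x y. x \<in> Fl S \<and> y \<in> Fl S} = span ((\<lambda>x. -a + x) ` (S - {a}))"
proof -
  let ?T = "span ((\<lambda>x. -a + x) ` (S - {a}))"
  have F: "Fl S = (\<lambda>x. a + x) ` ?T" using affine_hull_span2[OF assms] by (simp add: Fl_def)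
  show ?thesis
  proof
    show "{x - y | x y. x \<in> Fl S \<and> y \<in> Fl S} \<subseteq> ?T"
      using F span_diff by fastforce
  next
    show "?T \<subseteq> {x - y | x y. x \<in> Fl S \<and> y \<in> Fl S}"
    proof
      fix u assume u: "u \<in> ?T"
      have "a + u \<in> Fl S" "a + 0 \<in> Fl S" using F u span_zero by blast+
      then show "u \<in> {x - y | x y. x \<in> Fl S \<and> y \<in> Fl S}" by force
    qed
  qed
qed

lemma fdim_card:
  assumes "finite S"
  shows "fdim S \<le> int (card S) - 1"
proof (cases "S = {}")
  case True then show ?thesis by (simp add: fdim_def Fl_empty)
next
  case False
  then obtain a where a: "a \<in> S" by blast
  then have ne: "Fl S \<noteq> {}" by (auto simp: Fl_def hull_inc)
  have "dim (span ((\<lambda>x. -a + x) ` (S - {a}))) \<le> card ((\<lambda>x. -a + x) ` (S - {a}))"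
    using assms by (simp add: dim_le_card')
  also have "\<dots> \<le> card (S - {a})" using assms by (simp add: card_image_le)
  also have "\<dots> = card S - 1" using a assms by simp
  finally have le: "dim (span ((\<lambda>x. -a + x) ` (S - {a}))) \<le> card S - 1" .
  have eq: "fdim S = int (dim (span ((\<lambda>x. -a + x) ` (S - {a}))))"
    unfolding fdim_def using ne dir_eq[OF a] by simp
  have "card S \<ge> 1" using a assms card_0_eq[OF assms] by (cases "card S") auto
  then show ?thesis using le eq by linarith
qed

lemma sum_fun_app: "(sum f A) x = (\<Sum>a\<in>A. f a x)" for f :: "'a \<Rightarrow> 'b \<Rightarrow> 'c::comm_monoid_add"
  by (induct A rule: infinite_finite_induct) auto

definition phi :: "(nat \<times> nat \<Rightarrow> real) \<Rightarrow> nat \<Rightarrow> coords \<Rightarrow> real" where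
  "phi c e f = (\<Sum>k\<in>Iset e. c k * f k)"

lemma finite_Iset: "finite (Iset e)"
proof -
  have "Iset e \<subseteq> {0..e} \<times> {0..e}" by (auto simp: Iset_def)
  then show ?thesis by (rule finite_subset) auto
qed

lemma tri_eq: "{(i, j). i + j \<le> e} = insert (0::nat, 0::nat) (Iset e)"
  by (auto simp: Iset_def)

lemma zero_notin_Iset: "(0, 0) \<notin> Iset e" by (simp add: Iset_def)

lemma curve_eval:
  "(\<Sum>(i, j)\<in>{(i, j). i + j \<le> e}. c (i, j) * fst p ^ i * snd p ^ j) = c (0, 0) + phi c e (psi e p)"
proof -
  have "(\<Sum>(i, j)\<in>{(i, j). i + j \<le> e}. c (i, j) * fst p ^ i * snd p ^ j)
      = c (0, 0) + (\<Sum>(i, j)\<in>Iset e. c (i, j) * fst p ^ i * snd p ^ j)"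
    unfolding tri_eq using finite_Iset zero_notin_Iset by (simp add: sum.insert)
  also have "(\<Sum>(i, j)\<in>Iset e. c (i, j) * fst p ^ i * snd p ^ j) = phi c e (psi e p)"
    unfolding phi_def by (rule sum.cong) (auto simp: psi_def)
  finally show ?thesis .
qed

lemma linear_phi: "linear (phi c e)"
  by (rule linearI) (auto simp: phi_def sum.distrib scaleR_fun_def sum_distrib_left algebra_simps)

lemma affine_level: "affine {f. phi c e f = k}"
  unfolding affine_def
proof (intro ballI allI impI)
  fix x y u v assume "x \<in> {f. phi c e f = k}" "y \<in> {f. phi c e f = k}" "(u::real) + v = 1"
  then show "u *\<^sub>R x + v *\<^sub>R y \<in> {f. phi c e f = k}"
    using linear_phi[of c e] by (simp add: linear_add linear_scale) (metis distrib_right mult_1)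
qed

lemma curve_char:
  assumes "curve_of_degree e C"
  obtains c i0 j0 where "i0 + j0 = e" "c (i0, j0) \<noteq> 0"
    "\<And>p. p \<in> C \<longleftrightarrow> phi c e (psi e p) = - c (0, 0)"
proof -
  from assms obtain c i0 j0 where "i0 + j0 = e" "c (i0, j0) \<noteq> 0"
    and C: "C = {p. (\<Sum>(i, j)\<in>{(i, j). i + j \<le> e}. c (i, j) * fst p ^ i * snd p ^ j) = 0}"
    unfolding curve_of_degree_def by blast
  moreover have "\<And>p. p \<in> C \<longleftrightarrow> phi c e (psi e p) = - c (0, 0)"
    unfolding C curve_eval by auto
  ultimately show ?thesis using that by blast
qed

lemma curve_Fl:
  assumes "curve_of_degree e C" "D \<subseteq> C" "psi e p \<in> Fl (psi e ` D)"
  shows "p \<in> C"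
proof -
  obtain c i0 j0 where Cc: "\<And>p. p \<in> C \<longleftrightarrow> phi c e (psi e p) = - c (0, 0)"
    using curve_char[OF assms(1)] by metis
  have "psi e ` D \<subseteq> {f. phi c e f = - c (0, 0)}" using assms(2) Cc by auto
  then have "Fl (psi e ` D) \<subseteq> {f. phi c e f = - c (0, 0)}"
    unfolding Fl_def by (rule hull_minimal) (rule affine_level)
  then show ?thesis using assms(3) Cc by auto
qed

lemma card_tri: "card {(i, j). i + j \<le> e} = (e + 2) choose 2"
proof (induction e)
  case 0
  have "{(i, j). i + j \<le> (0::nat)} = {(0, 0)}" by auto
  then show ?case by (simp add: numeral_2_eq_2)
next
  case (Suc e)
  have eq: "{(i, j). i + j \<le> Suc e} = {(i, j). i + j \<le> e} \<union> (\<lambda>i. (i, Suc e - i)) ` {0..Suc e}"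
    by auto
  have fin: "finite {(i, j). i + j \<le> e}"
    unfolding tri_eq using finite_Iset by simp
  have inj: "inj_on (\<lambda>i. (i, Suc e - i)) {0..Suc e}" by (auto simp: inj_on_def)
  have "card {(i, j). i + j \<le> Suc e} = card {(i, j). i + j \<le> e} + card ((\<lambda>i. (i, Suc e - i)) ` {0..Suc e})"
    unfolding eq by (rule card_Un_disjoint) (use fin in auto)
  also have "\<dots> = ((e + 2) choose 2) + (e + 2)" using Suc.IH card_image[OF inj] by simp
  also have "\<dots> = (Suc e + 2) choose 2" by (simp add: numeral_2_eq_2)
  finally show ?case .
qed

lemma card_Iset: "int (card (Iset e)) = bin2 e - 1"
proof -
  have "card {(i, j). i + j \<le> e} = Suc (card (Iset e))"
    unfolding tri_eq using finite_Iset zero_notin_Iset by simp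
  then show ?thesis using card_tri[of e] by (simp add: bin2_def)
qed

lemma psi_out: "k \<notin> Iset e \<Longrightarrow> psi e p k = 0"
  by (cases k) (auto simp: psi_def)

lemma alpha_nonneg:
  assumes e: "e \<ge> 1" and C: "curve_of_degree e C" and D: "D \<subseteq> C"
  shows "fdim (psi e ` D) \<le> bin2 e - 2"
proof -
  obtain c i0 j0 where ij: "i0 + j0 = e" and c0: "c (i0, j0) \<noteq> 0"
    and Cc: "\<And>p. p \<in> C \<longleftrightarrow> phi c e (psi e p) = - c (0, 0)"
    using curve_char[OF C] by metis
  have ijI: "(i0, j0) \<in> Iset e" using ij e by (simp add: Iset_def)
  have two: "{(1, 0), (0, 1)} \<subseteq> Iset e" using e by (auto simp: Iset_def)
  have "card {(1::nat, 0::nat), (0, 1)} \<le> card (Iset e)"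
    by (rule card_mono[OF finite_Iset two])
  then have cI: "card (Iset e) \<ge> 2" by simp
  show ?thesis
  proof (cases "D = {}")
    case True
    then show ?thesis using cI card_Iset[of e] by (simp add: fdim_def Fl_empty)
  next
    case False
    then obtain a where a: "a \<in> D" by blast
    let ?S = "psi e ` D"
    let ?X = "(\<lambda>x. - psi e a + x) ` (?S - {psi e a})"
    have ne: "Fl ?S \<noteq> {}" using a by (auto simp: Fl_def hull_inc)
    have fd: "fdim ?S = int (dim (span ?X))"
      unfolding fdim_def using ne dir_eq[of "psi e a" ?S] a by simp
    define W where "W = {f. phi c e f = 0 \<and> (\<forall>k. k \<notin> Iset e \<longrightarrow> f k = 0)}"
    have subW: "subspace W"
      unfolding subspace_def
    proof (intro conjI ballI allI)
      show "0 \<in> W" unfolding W_def using linear_0[OF linear_phi[of c e]] by simp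
    next
      fix x y assume "x \<in> W" "y \<in> W"
      then show "x + y \<in> W" unfolding W_def using linear_add[OF linear_phi[of c e]] by simp
    next
      fix r :: real and x assume "x \<in> W"
      then show "r *\<^sub>R x \<in> W" unfolding W_def using linear_scale[OF linear_phi[of c e]]
        by (simp add: scaleR_fun_def)
    qed
    have XW: "?X \<subseteq> W"
    proof
      fix x assume "x \<in> ?X"
      then obtain q where q: "q \<in> D" and x: "x = - psi e a + psi e q" by auto
      have "phi c e x = - phi c e (psi e a) + phi c e (psi e q)"
        unfolding x using linear_phi[of c e] by (simp add: linear_add linear_uminus linear_diff)
      also have "\<dots> = 0"
      proof -
        have "q \<in> C" "a \<in> C" using q a D by auto
        then show ?thesis using Cc by simp
      qed
      finally show "x \<in> W" unfolding W_def x by (auto simp: psi_out)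
    qed
    have VW: "span ?X \<subseteq> W" by (rule span_minimal[OF XW subW])
    obtain b where b: "b \<subseteq> span ?X" "independent b" "span ?X \<subseteq> span b" "card b = dim (span ?X)"
      using basis_exists[of "span ?X"] by blast
    define \<delta> where "\<delta> = (\<lambda>k. if k = (i0, j0) then 1 else (0::real))"
    have phid: "phi c e \<delta> = c (i0, j0)"
      unfolding phi_def \<delta>_def using ijI finite_Iset by (simp add: if_distrib cong: if_cong)
    have dW: "\<delta> \<notin> W" using phid c0 by (simp add: W_def)
    have spb: "span b \<subseteq> W" using span_minimal[OF _ subW, of b] b(1) VW by blast
    have dnot: "\<delta> \<notin> span b" using spb dW by blast
    have indep: "independent (insert \<delta> b)" by (rule independent_insertI[OF dnot b(2)])
    define E where "E = (\<lambda>k. (\<lambda>k'. if k' = k then 1 else (0::real))) ` Iset e"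
    have WE: "W \<subseteq> span E"
    proof
      fix f assume f: "f \<in> W"
      have "f = (\<Sum>k\<in>Iset e. f k *\<^sub>R (\<lambda>k'. if k' = k then 1 else (0::real)))"
      proof
        fix x
        show "f x = (\<Sum>k\<in>Iset e. f k *\<^sub>R (\<lambda>k'. if k' = k then 1 else (0::real))) x"
          using f finite_Iset unfolding sum_fun_app W_def
          by (cases x; cases "x \<in> Iset e") (auto simp: scaleR_fun_def if_distrib cong: if_cong)
      qed
      also have "\<dots> \<in> span E"
        by (intro span_sum span_scale span_base) (auto simp: E_def)
      finally show "f \<in> span E" .
    qed
    have "insert \<delta> b \<subseteq> span E"
    proof -
      have "\<delta> \<in> span E" unfolding \<delta>_def E_def using ijI by (intro span_base) auto
      then show ?thesis using VW WE b(1) by blast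
    qed
    moreover have fE: "finite E" unfolding E_def using finite_Iset by simp
    ultimately have bnd: "finite (insert \<delta> b) \<and> card (insert \<delta> b) \<le> card E"
      using independent_span_bound[OF fE indep] by (simp only:)
    have cE: "card E \<le> card (Iset e)" unfolding E_def using finite_Iset by (rule card_image_le)
    have "\<delta> \<notin> b" using dnot span_base by metis
    then have "card (insert \<delta> b) = card b + 1" using bnd by simp
    then have "card b + 1 \<le> card (Iset e)" using bnd cE by linarith
    then have "int (card b) \<le> bin2 e - 2" using card_Iset[of e] by linarith
    then show ?thesis using fd b(4) by simp
  qed
qed

lemma psi_inj: assumes "e \<ge> 1" "psi e p = psi e q" shows "p = q"
proof -
  have "(1, 0) \<in> Iset e" "(0, 1) \<in> Iset e" using assms(1) by (auto simp: Iset_def)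
  then have "psi e p (1, 0) = fst p" "psi e p (0, 1) = snd p"
    "psi e q (1, 0) = fst q" "psi e q (0, 1) = snd q" by (auto simp: psi_def)
  then show ?thesis using assms(2) by (metis prod.collapse)
qed

lemma key:
  assumes e: "e \<ge> 1" and C: "curve_of_degree e C" and fB: "finite B"
  shows "gamma e B (B \<inter> C) = card (B \<inter> C)"
    and "We d e B (B \<inter> C) = Fl (psi (d - e) ` (B - C))"
    and "alpha e (B \<inter> C) \<ge> 0"
proof -
  let ?D = "B \<inter> C"
  have mem: "b \<in> C" if "psi e b \<in> Ve e ?D" for b
    using curve_Fl[OF C, of ?D b] that by (auto simp: Ve_def)
  have hull: "psi e b \<in> Ve e ?D" if "b \<in> ?D" for b
    using that by (auto simp: Ve_def Fl_def hull_inc)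
  have "Ve e ?D \<inter> psi e ` B = psi e ` ?D"
    using mem hull by blast
  moreover have "inj_on (psi e) ?D" using psi_inj[OF e] by (auto simp: inj_on_def)
  ultimately show "gamma e B ?D = card ?D" by (simp add: gamma_def card_image)
  have "B - psi_pre e (Ve e ?D) = B - C"
    using mem hull by (auto simp: psi_pre_def)
  then show "We d e B ?D = Fl (psi (d - e) ` (B - C))" by (simp add: We_def)
  show "alpha e ?D \<ge> 0" using alpha_nonneg[OF e C, of ?D] by (simp add: alpha_def)
qed

theorem lemma23:
  fixes d :: nat and A C0 B0 B :: "(real \<times> real) set"
  assumes "d \<ge> 1"
    and "B0 \<subseteq> A - C0"
    and "B \<subseteq> A" and "finite B" and "int (card B) = bin2 d - 3"
    and "fdim (psi d ` B) = bin2 d - 4"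
    and "B0 \<subseteq> B"
    and "B \<inter> C0 = B - B0"
    and "\<forall>(e, D)\<in>Iidx d B C0. max (tau d e B D) (mu d e B D) < bin2 d"
    and "\<forall>(e, D)\<in>({1..d-1} \<times> Pow B) - Iidx d B C0. alpha e D \<ge> 0 \<longrightarrow>
           int (gamma e B D) < bin2 d - bin2 (d - e) \<and> beta d e B D < 0"
  shows "B \<in> Nd3 d A B0 C0"
proof -
  have P: "int (card (B \<inter> C)) < bin2 d - bin2 (d - e) \<and>
     (fdim (psi (d - e) ` (B - C)) > bin2 (d - e) - 3 \<or>
      (int (card (B \<inter> C)) = bin2 d - bin2 (d - e) - 1 \<and> fdim (psi (d - e) ` (B - C)) = bin2 (d - e) - 3))"
    if e: "e \<in> {1..d-1}" and C: "curve_of_degree e C" for e C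
  proof -
    let ?D = "B \<inter> C"
    have e1: "e \<ge> 1" using e by simp
    note k = key[OF e1 C assms(4)]
    have beta: "beta d e B ?D = bin2 (d - e) - 3 - fdim (psi (d - e) ` (B - C))"
      unfolding beta_def k(2) fdim_Fl ..
    have DP: "(e, ?D) \<in> {1..d-1} \<times> Pow B" using e by auto
    show ?thesis
    proof (cases "(e, ?D) \<in> Iidx d B C0")
      case False
      then have "int (gamma e B ?D) < bin2 d - bin2 (d - e) \<and> beta d e B ?D < 0"
        using assms(10) DP k(3) by blast
      then show ?thesis using k(1) beta by simp
    next
      case True
      then have mx: "max (tau d e B ?D) (mu d e B ?D) < bin2 d" using assms(9) by blast
      then have "mu d e B ?D < bin2 d" by simp
      then have n: "int (card ?D) < bin2 d - bin2 (d - e)"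
        using k(1) k(3) by (simp add: mu_def)
      show ?thesis
      proof (cases "beta d e B ?D < 0")
        case True
        then show ?thesis using n beta by simp
      next
        case False
        have "tau d e B ?D < bin2 d" using mx by simp
        then have "int (card ?D) = bin2 d - bin2 (d - e) - 1 \<and> beta d e B ?D = 0"
          using False n k(1) k(3) assms(5) unfolding tau_def by (auto split: if_splits)
        then show ?thesis using n beta by simp
      qed
    qed
  qed
  have Fle: "fdim (psi (d - e) ` (B - C)) \<le> int (card B) - int (card (B \<inter> C)) - 1" for e C
  proof -
    have "fdim (psi (d - e) ` (B - C)) \<le> int (card (psi (d - e) ` (B - C))) - 1"
      using fdim_card assms(4) by simp
    also have "card (psi (d - e) ` (B - C)) \<le> card (B - C)" using assms(4) by (simp add: card_image_le)
    moreover have "card (B - C) = card B - card (B \<inter> C)" using assms(4) card_Diff_subset_Int by (metis Diff_Int2 Int_absorb1 Int_commute Int_lower1 card_Diff_subset finite_Int)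
    moreover have "card (B \<inter> C) \<le> card B" using assms(4) by (simp add: card_mono)
    ultimately show ?thesis by linarith
  qed
  show ?thesis
    unfolding Nd3_def Nd_def
  proof (intro CollectI conjI ballI allI impI)
    fix e C assume e: "e \<in> {1..d-1}" and C: "curve_of_degree e C"
    note p = P[OF e C]
    have f: "fdim (psi (d - e) ` (B - C)) \<le> int (card B) - int (card (B \<inter> C)) - 1" by (rule Fle)
    show "int (card (B \<inter> C)) < bin2 d - bin2 (d - e)" using p by simp
    { assume "int (card (B \<inter> C)) = bin2 d - bin2 (d - e) - 1"
      then show "fdim (psi (d - e) ` (B - C)) = bin2 (d - e) - 3" using p f assms(5) by linarith }
    { assume "int (card (B \<inter> C)) < bin2 d - bin2 (d - e) - 1"
      then show "fdim (psi (d - e) ` (B - C)) > bin2 (d - e) - 3" using p by linarith }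
  qed (use assms in auto)
qed

end
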